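(* Let $(X,\mathcal A,m)$ be a probability space and $\mathcal B$ a Banach space continuously embedded in $L^1(X,m)$ and containing the constants. Let $L_\epsilon$, $\epsilon\in V$ ($V$ a neighbourhood of $0$), be Markov operators on $\mathcal B$ such that for each $\epsilon$, $1$ is a simple eigenvalue of $L_\epsilon$ with eigenfunction $h_\epsilon$ normalized by $\int h_\epsilon\,dm=1$. Suppose: (1) $\epsilon\mapsto L_\epsilon h_0\in\mathcal B$ is differentiable at $\epsilon=0$; (2) $\epsilon\mapsto L_\epsilon\phi\in\mathcal B$ is continuous at $\epsilon=0$ for every $\phi\in\mathcal B$; (3) there exist $\theta\in(0,1)$ and $C>0$, independent of $\epsilon$, such that $\|L_\epsilon^n\phi\|_{\mathcal B}\le C\theta^n\|\phi\|_{\mathcal B}$ for all $\phi\in\mathcal B_0$ and $n\ge1$. Then $h_\epsilon$ is differentiable at $\epsilon=0$ as an element of $\mathcal B$, and $\partial_\epsilon h_\epsilon|_{\epsilon=0}=(I-L_0)^{-1}\partial_\epsilon L_\epsilon h_0|_{\epsilon=0}$.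
   Context: $\mathcal B_0=\{\phi\in\mathcal B:\int\phi\,dm=0\}$; $(I-L_0)^{-1}$ is the inverse of $I-L_0$ on $\mathcal B_0$. A Markov operator is a positive linear operator preserving the integral with respect to $m$. *)

theory Defs
  imports "HOL-Probability.Probability"
begin

definition embedded_L1 :: "'a measure \<Rightarrow> ('b::banach \<Rightarrow> 'a \<Rightarrow> real) \<Rightarrow> bool" where
  "embedded_L1 M emb \<longleftrightarrow>
     (\<forall>\<phi>. integrable M (emb \<phi>)) \<and>
     (\<forall>\<phi> \<psi> x. emb (\<phi> + \<psi>) x = emb \<phi> x + emb \<psi> x) \<and>
     (\<forall>c \<phi> x. emb (c *\<^sub>R \<phi>) x = c * emb \<phi> x) \<and>
     (\<forall>\<phi>. (AE x in M. emb \<phi> x = 0) \<longrightarrow> \<phi> = 0) \<and>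
     (\<exists>K. \<forall>\<phi>. (\<integral>x. \<bar>emb \<phi> x\<bar> \<partial>M) \<le> K * norm \<phi>) \<and>
     (\<exists>e. AE x in M. emb e x = 1)"

definition Bint :: "'a measure \<Rightarrow> ('b \<Rightarrow> 'a \<Rightarrow> real) \<Rightarrow> 'b \<Rightarrow> real" where
  "Bint M emb \<phi> = (\<integral>x. emb \<phi> x \<partial>M)"

definition B0 :: "'a measure \<Rightarrow> ('b \<Rightarrow> 'a \<Rightarrow> real) \<Rightarrow> 'b set" where
  "B0 M emb = {\<phi>. Bint M emb \<phi> = 0}"

definition markov_op :: "'a measure \<Rightarrow> ('b::banach \<Rightarrow> 'a \<Rightarrow> real) \<Rightarrow> ('b \<Rightarrow> 'b) \<Rightarrow> bool" where
  "markov_op M emb T \<longleftrightarrow> bounded_linear T \<and>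
     (\<forall>\<phi>. (AE x in M. emb \<phi> x \<ge> 0) \<longrightarrow> (AE x in M. emb (T \<phi>) x \<ge> 0)) \<and>
     (\<forall>\<phi>. Bint M emb (T \<phi>) = Bint M emb \<phi>)"

end

theory Submission imports Defs begin

lemma Bint_bl:
  assumes "embedded_L1 M emb"
  shows "bounded_linear (Bint M emb)"
proof -
  from assms have I: "\<And>\<phi>. integrable M (emb \<phi>)"
    and A: "\<And>\<phi> \<psi>. emb (\<phi> + \<psi>) = (\<lambda>x. emb \<phi> x + emb \<psi> x)"
    and S: "\<And>c \<phi>. emb (c *\<^sub>R \<phi>) = (\<lambda>x. c * emb \<phi> x)"
    unfolding embedded_L1_def by auto
  from assms obtain K where K: "\<And>\<phi>. (\<integral>x. \<bar>emb \<phi> x\<bar> \<partial>M) \<le> K * norm \<phi>"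
    unfolding embedded_L1_def by auto
  show ?thesis
  proof (rule bounded_linear_intro[where K=K])
    fix x y show "Bint M emb (x + y) = Bint M emb x + Bint M emb y"
      unfolding Bint_def A using I by (simp add: Bochner_Integration.integral_add)
  next
    fix r x show "Bint M emb (r *\<^sub>R x) = r *\<^sub>R Bint M emb x"
      unfolding Bint_def S by simp
  next
    fix x
    have "norm (Bint M emb x) \<le> (\<integral>y. \<bar>emb x y\<bar> \<partial>M)"
      unfolding Bint_def real_norm_def by (rule integral_abs_bound)
    also have "\<dots> \<le> norm x * K" using K[of x] by (simp add: mult.commute)
    finally show "norm (Bint M emb x) \<le> norm x * K" .
  qed
qed

lemma funpow_bl: "bounded_linear (T::'a::real_normed_vector \<Rightarrow> 'a) \<Longrightarrow> bounded_linear (T ^^ n)"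
proof (induction n)
  case 0 have "T ^^ 0 = (\<lambda>x. x)" by auto
  then show ?case using bounded_linear_ident by metis
next
  case (Suc n)
  have "bounded_linear (\<lambda>x. T ((T ^^ n) x))" by (rule bounded_linear_compose[OF Suc.prems Suc.IH[OF Suc.prems]])
  then show ?case by (simp add: o_def)
qed

lemma funpow_Bint:
  assumes "markov_op M emb T" shows "Bint M emb ((T ^^ n) \<phi>) = Bint M emb \<phi>"
  using assms by (induction n) (auto simp: markov_op_def)

lemma telescope:
  assumes "bounded_linear T"
  shows "\<phi> - (T ^^ N) \<phi> = (\<Sum>n<N. (T ^^ n) (\<phi> - T \<phi>))"
proof (induction N)
  case 0 then show ?case by simp
next
  case (Suc N)
  interpret bl: bounded_linear "T ^^ N" using funpow_bl[OF assms] .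
  have "\<phi> - (T ^^ Suc N) \<phi> = (\<phi> - (T ^^ N) \<phi>) + (T ^^ N) (\<phi> - T \<phi>)"
    by (simp add: funpow_swap1 bl.diff)
  then show ?case using Suc by simp
qed

lemma inv_bound:
  fixes T :: "'b::banach \<Rightarrow> 'b"
  assumes blB: "bounded_linear (Bint M emb)" and mk: "markov_op M emb T"
    and pw: "\<And>\<phi> n. \<phi> \<in> B0 M emb \<Longrightarrow> n \<ge> 1 \<Longrightarrow> norm ((T ^^ n) \<phi>) \<le> C * \<theta> ^ n * norm \<phi>"
    and th: "0 < \<theta>" "\<theta> < 1" and C: "0 < C"
    and N: "C * \<theta> ^ N \<le> 1/2" "N \<ge> 1"
    and phi: "\<phi> \<in> B0 M emb"
  shows "norm \<phi> \<le> 2 * N * (1 + C) * norm (\<phi> - T \<phi>)"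
proof -
  interpret Bi: bounded_linear "Bint M emb" by fact
  have blT: "bounded_linear T" using mk by (simp add: markov_op_def)
  define \<psi> where "\<psi> = \<phi> - T \<phi>"
  have psi: "\<psi> \<in> B0 M emb" using phi mk unfolding \<psi>_def B0_def markov_op_def
    by (simp add: Bi.diff)
  have each: "norm ((T ^^ n) \<psi>) \<le> (1 + C) * norm \<psi>" for n
  proof (cases "n = 0")
    case True then show ?thesis using C by (simp add: distrib_right)
  next
    case False
    then have "norm ((T ^^ n) \<psi>) \<le> C * \<theta> ^ n * norm \<psi>" using pw[OF psi] by simp
    also have "\<dots> \<le> C * 1 * norm \<psi>"
      using th C by (intro mult_right_mono mult_left_mono power_le_one) auto
    also have "\<dots> \<le> (1 + C) * norm \<psi>" by (simp add: distrib_right)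
    finally show ?thesis .
  qed
  have "norm \<phi> = norm ((\<phi> - (T ^^ N) \<phi>) + (T ^^ N) \<phi>)" by simp
  also have "\<dots> \<le> norm (\<phi> - (T ^^ N) \<phi>) + norm ((T ^^ N) \<phi>)" by (rule norm_triangle_ineq)
  also have "norm (\<phi> - (T ^^ N) \<phi>) = norm (\<Sum>n<N. (T ^^ n) \<psi>)"
    using telescope[OF blT] \<psi>_def by simp
  also have "\<dots> \<le> (\<Sum>n<N. norm ((T ^^ n) \<psi>))" by (rule norm_sum)
  also have "\<dots> \<le> real (card {..<N}) * ((1 + C) * norm \<psi>)"
    by (rule sum_bounded_above) (use each in auto)
  also have "norm ((T ^^ N) \<phi>) \<le> C * \<theta> ^ N * norm \<phi>" using pw[OF phi N(2)] .
  also have "\<dots> \<le> 1/2 * norm \<phi>" using N(1) by (intro mult_right_mono) auto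
  finally have "norm \<phi> \<le> real N * ((1 + C) * norm \<psi>) + 1/2 * norm \<phi>" by simp
  then show ?thesis unfolding \<psi>_def by simp
qed

theorem proposition6p2:
  fixes M :: "'a measure" and emb :: "'b::banach \<Rightarrow> 'a \<Rightarrow> real"
    and L :: "real \<Rightarrow> 'b \<Rightarrow> 'b" and h :: "real \<Rightarrow> 'b" and V :: "real set"
    and D :: 'b and \<theta> C :: real
  assumes "prob_space M"
    and "embedded_L1 M emb"
    and "open V" and "0 \<in> V"
    and "\<And>\<epsilon>. \<epsilon> \<in> V \<Longrightarrow> markov_op M emb (L \<epsilon>)"
    and "\<And>\<epsilon>. \<epsilon> \<in> V \<Longrightarrow> {\<phi>. L \<epsilon> \<phi> = \<phi>} = span {h \<epsilon>}"
    and "\<And>\<epsilon>. \<epsilon> \<in> V \<Longrightarrow> Bint M emb (h \<epsilon>) = 1"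
    and "((\<lambda>\<epsilon>. L \<epsilon> (h 0)) has_vector_derivative D) (at 0)"
    and "\<And>\<phi>. continuous (at 0) (\<lambda>\<epsilon>. L \<epsilon> \<phi>)"
    and "0 < \<theta>" and "\<theta> < 1" and "0 < C"
    and "\<And>\<epsilon> \<phi> n. \<epsilon> \<in> V \<Longrightarrow> \<phi> \<in> B0 M emb \<Longrightarrow> n \<ge> 1 \<Longrightarrow>
           norm ((L \<epsilon> ^^ n) \<phi>) \<le> C * \<theta> ^ n * norm \<phi>"
  shows "(h has_vector_derivative
            (the_inv_into (B0 M emb) (\<lambda>\<phi>. \<phi> - L 0 \<phi>) D)) (at 0)"
proof -
  note A = assms
  have blB: "bounded_linear (Bint M emb)" by (rule Bint_bl[OF A(2)])
  interpret Bi: bounded_linear "Bint M emb" by fact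
  obtain N0 where N0: "\<theta> ^ N0 < 1 / (2 * C)"
    using real_arch_pow_inv[of "1/(2*C)" \<theta>] A(10,11,12) by auto
  define N where "N = Suc N0"
  have N: "C * \<theta> ^ N \<le> 1/2" "N \<ge> 1"
  proof -
    have "\<theta> ^ N \<le> \<theta> ^ N0" unfolding N_def using A(10,11) by (simp add: power_decreasing)
    then have "C * \<theta> ^ N \<le> C * (1 / (2*C))" using N0 A(12) by (intro mult_left_mono) auto
    then show "C * \<theta> ^ N \<le> 1/2" using A(12) by simp
  qed (simp add: N_def)
  define Kc where "Kc = 2 * real N * (1 + C)"
  have Kc: "Kc > 0" unfolding Kc_def using N A(12) by simp
  have bnd: "\<And>\<epsilon> \<phi>. \<epsilon> \<in> V \<Longrightarrow> \<phi> \<in> B0 M emb \<Longrightarrow> norm \<phi> \<le> Kc * norm (\<phi> - L \<epsilon> \<phi>)"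
    unfolding Kc_def
    by (rule inv_bound[OF blB A(5) A(13) A(10,11,12) N]) auto
  have mk0: "markov_op M emb (L 0)" using A(5,4) .
  have bl: "\<And>\<epsilon>. \<epsilon> \<in> V \<Longrightarrow> bounded_linear (L \<epsilon>)" using A(5) by (simp add: markov_op_def)
  have bl0: "bounded_linear (L 0)" using bl A(4) .
  interpret L0: bounded_linear "L 0" by fact
  have fixh: "\<And>\<epsilon>. \<epsilon> \<in> V \<Longrightarrow> L \<epsilon> (h \<epsilon>) = h \<epsilon>"
  proof -
    fix \<epsilon> assume e: "\<epsilon> \<in> V"
    have "h \<epsilon> \<in> span {h \<epsilon>}" by (simp add: span_base)
    then show "L \<epsilon> (h \<epsilon>) = h \<epsilon>" using A(6)[OF e] by blast
  qed
  have DB0: "Bint M emb D = 0"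
  proof -
    have d1: "((\<lambda>\<epsilon>. Bint M emb (L \<epsilon> (h 0))) has_vector_derivative Bint M emb D) (at 0)"
      by (rule Bi.has_vector_derivative[OF A(8)])
    have d2: "((\<lambda>\<epsilon>. 1::real) has_vector_derivative Bint M emb D) (at 0)"
    proof (rule has_vector_derivative_transform_within_open[OF d1 A(3) A(4)])
      fix y assume "y \<in> V"
      then show "Bint M emb (L y (h 0)) = 1" using A(5) A(7)[OF A(4)] by (simp add: markov_op_def)
    qed
    have "((\<lambda>\<epsilon>. 1::real) has_vector_derivative 0) (at 0)" by (rule has_vector_derivative_const)
    then show ?thesis using vector_derivative_unique_at[OF d2] by simp
  qed
  have pw0: "\<And>\<phi> n. \<phi> \<in> B0 M emb \<Longrightarrow> n \<ge> 1 \<Longrightarrow> norm ((L 0 ^^ n) \<phi>) \<le> C * \<theta> ^ n * norm \<phi>"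
    using A(13) A(4) by blast
  have DB: "D \<in> B0 M emb" using DB0 by (simp add: B0_def)
  have summ: "summable (\<lambda>n. (L 0 ^^ n) D)"
  proof (rule summable_comparison_test'[where N=1])
    show "summable (\<lambda>n. C * norm D * \<theta> ^ n)"
      using A(10,11) by (intro summable_mult summable_geometric) auto
  next
    fix n :: nat assume "n \<ge> 1"
    then show "norm ((L 0 ^^ n) D) \<le> C * norm D * \<theta> ^ n" using pw0[OF DB] by (simp add: mult_ac)
  qed
  define u where "u = (\<Sum>n. (L 0 ^^ n) D)"
  have "L 0 u = (\<Sum>n. L 0 ((L 0 ^^ n) D))" unfolding u_def by (rule L0.suminf[OF summ])
  also have "\<dots> = (\<Sum>n. (L 0 ^^ Suc n) D)" by simp
  also have "\<dots> = u - D" unfolding u_def using suminf_split_head[OF summ] by simp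
  finally have Lu: "L 0 u = u - D" .
  have "Bint M emb u = (\<Sum>n. Bint M emb ((L 0 ^^ n) D))" unfolding u_def by (rule Bi.suminf[OF summ])
  also have "\<dots> = 0" using funpow_Bint[OF mk0] DB0 by simp
  finally have uB: "u \<in> B0 M emb" by (simp add: B0_def)
  have inj: "inj_on (\<lambda>\<phi>. \<phi> - L 0 \<phi>) (B0 M emb)"
  proof (rule inj_onI)
    fix x y assume x: "x \<in> B0 M emb" and y: "y \<in> B0 M emb" and eq: "x - L 0 x = y - L 0 y"
    have xy: "x - y \<in> B0 M emb" using x y by (simp add: B0_def Bi.diff)
    have "(x - y) - L 0 (x - y) = 0" using eq by (simp add: L0.diff algebra_simps)
    then have "norm (x - y) \<le> 0" using bnd[OF A(4) xy] by simp
    then show "x = y" by simp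
  qed
  have inv: "the_inv_into (B0 M emb) (\<lambda>\<phi>. \<phi> - L 0 \<phi>) D = u"
    by (rule the_inv_into_f_eq[OF inj _ uB]) (simp add: Lu)
  have hyp: "((\<lambda>y. norm (L y (h 0) - L 0 (h 0) - (y - 0) *\<^sub>R D) / norm (y - 0)) \<longlongrightarrow> 0) (at 0)"
    using A(8) unfolding has_vector_derivative_def has_derivative_iff_norm by simp
  have cont: "((\<lambda>y. norm (L y u - L 0 u)) \<longlongrightarrow> 0) (at 0)"
  proof -
    have "((\<lambda>y. L y u) \<longlongrightarrow> L 0 u) (at 0)" using A(9)[of u] unfolding continuous_at .
    then have "((\<lambda>y. L y u - L 0 u) \<longlongrightarrow> 0) (at 0)" by (rule LIM_zero)
    then show ?thesis by (rule tendsto_norm_zero)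
  qed
  show ?thesis unfolding inv has_vector_derivative_def has_derivative_iff_norm
  proof
    show "bounded_linear (\<lambda>x. x *\<^sub>R u)" by (rule bounded_linear_scaleR_left)
  next
    let ?g = "\<lambda>y. Kc * (norm (L y (h 0) - L 0 (h 0) - (y - 0) *\<^sub>R D) / norm (y - 0) + norm (L y u - L 0 u))"
    have g: "(?g \<longlongrightarrow> 0) (at 0)"
      using tendsto_mult[OF tendsto_const tendsto_add[OF hyp cont], of Kc] by simp
    have ev: "eventually (\<lambda>y. y \<in> V - {0}) (at (0::real))" by (rule eventually_at_in_open[OF A(3,4)])
    show "((\<lambda>y. norm (h y - h 0 - (y - 0) *\<^sub>R u) / norm (y - 0)) \<longlongrightarrow> 0) (at 0)"
    proof (rule Lim_null_comparison[OF _ g])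
      show "\<forall>\<^sub>F y in at 0. norm (norm (h y - h 0 - (y - 0) *\<^sub>R u) / norm (y - 0)) \<le> ?g y"
        using ev
      proof eventually_elim
        case (elim y)
        then have yV: "y \<in> V" and y0: "y \<noteq> 0" by auto
        interpret Ly: bounded_linear "L y" using bl[OF yV] .
        define w where "w = h y - h 0 - y *\<^sub>R u"
        have wB: "w \<in> B0 M emb" unfolding w_def using uB A(7)[OF yV] A(7)[OF A(4)]
          by (simp add: B0_def Bi.diff Bi.scaleR)
        have "w - L y w = (L y (h 0) - L 0 (h 0) - y *\<^sub>R D) + y *\<^sub>R (L y u - L 0 u)"
        proof -
          have yu: "D = u - L 0 u" using Lu by simp
          show ?thesis
            unfolding w_def yu using fixh[OF yV] fixh[OF A(4)]
            by (simp add: Ly.diff Ly.add Ly.scaleR algebra_simps)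
        qed
        then have "norm (w - L y w) \<le> norm (L y (h 0) - L 0 (h 0) - y *\<^sub>R D) + \<bar>y\<bar> * norm (L y u - L 0 u)"
          by (metis norm_scaleR norm_triangle_ineq real_norm_def)
        then have "norm w \<le> Kc * (norm (L y (h 0) - L 0 (h 0) - y *\<^sub>R D) + \<bar>y\<bar> * norm (L y u - L 0 u))"
          using bnd[OF yV wB] Kc by (meson mult_left_mono less_imp_le order_trans)
        then have "norm w / \<bar>y\<bar> \<le> Kc * (norm (L y (h 0) - L 0 (h 0) - y *\<^sub>R D) + \<bar>y\<bar> * norm (L y u - L 0 u)) / \<bar>y\<bar>"
          using y0 by (intro divide_right_mono) auto
        also have "\<dots> = ?g y" using y0 by (simp add: field_simps)
        finally show ?case unfolding w_def by simp
      qed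
    qed
  qed
qed

end
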